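(* Let $m,n\ge1$, let $a_1,\dots,a_n$ be distinct nonnegative real numbers, let $m_1,\dots,m_n\ge1$ be integers, let $c_0,\dots,c_{m-1},b_k^{(j)}\in\mathbb{C}$, and let $$r(\lambda)=\lambda^m-c_{m-1}\lambda^{m-1}-\cdots-c_1\lambda-c_0-\sum_{j=1}^n\sum_{k=1}^{m_j}\frac{b_k^{(j)}}{(\lambda-a_j)^k}.$$ If $\lambda_0$ is a zero of $r$, then $$|\lambda_0|\le\frac{\alpha+\beta+\sqrt{(\alpha-\beta)^2+(\gamma+\delta)^2}}{2},$$ where $\alpha=\max_{1\le j\le n}\{a_j+\cos(\frac{\pi}{m_j+1})\}$, $\beta=w(\mathcal{B}_0)$, $\gamma=\sqrt{\sum_{j=1}^n m_j}$, $\delta=\sqrt{\sum_{j=1}^n\sum_{k=1}^{m_j}|b_k^{(j)}|^2}$, and $\mathcal{B}_0$ is the $m\times m$ matrix with $1$'s on the superdiagonal, last row $(c_0,c_1,\dots,c_{m-1})$, and zeros elsewhere.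
   Context: A zero of $r$ is a $\lambda_0\in\mathbb{C}\setminus\{a_1,\dots,a_n\}$ with $r(\lambda_0)=0$. For a square complex matrix $A$, $w(A)=\sup\{|x^*Ax|: x^*x=1\}$ is its numerical radius. *)

theory Defs
  imports "HOL-Analysis.Analysis"
begin

text \<open>Square complex matrices of size m are represented as functions
  nat => nat => complex, only entries with indices < m matter.
  Vectors in C^m are functions nat => complex with indices < m.\<close>

definition numerical_radius :: "nat \<Rightarrow> (nat \<Rightarrow> nat \<Rightarrow> complex) \<Rightarrow> real" where
  "numerical_radius m A =
     Sup {cmod (\<Sum>i<m. \<Sum>j<m. cnj (x i) * A i j * x j) | x :: nat \<Rightarrow> complex.
            (\<Sum>i<m. (cmod (x i))^2) = 1}"

definition B0 :: "nat \<Rightarrow> (nat \<Rightarrow> complex) \<Rightarrow> nat \<Rightarrow> nat \<Rightarrow> complex" where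
  "B0 m c i j = (if j = i + 1 then 1 else if i = m - 1 then c j else 0)"

definition rfun :: "nat \<Rightarrow> (nat \<Rightarrow> complex) \<Rightarrow> nat \<Rightarrow> (nat \<Rightarrow> real) \<Rightarrow> (nat \<Rightarrow> nat)
      \<Rightarrow> (nat \<Rightarrow> nat \<Rightarrow> complex) \<Rightarrow> complex \<Rightarrow> complex" where
  "rfun m c n a mm b z =
     z ^ m - (\<Sum>i<m. c i * z ^ i)
       - (\<Sum>j=1..n. \<Sum>k=1..mm j. b j k / (z - complex_of_real (a j)) ^ k)"

end

theory Submission imports Defs "HOL-Analysis.Analysis" begin
lemma cs_real:
  fixes f g :: "'a \<Rightarrow> real"
  shows "(\<Sum>i\<in>I. f i * g i) \<le> sqrt (\<Sum>i\<in>I. (f i)^2) * sqrt (\<Sum>i\<in>I. (g i)^2)"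
proof -
  have "(\<Sum>i\<in>I. f i * g i) \<le> sqrt ((\<Sum>i\<in>I. f i * g i)^2)" by simp
  also have "\<dots> \<le> sqrt ((\<Sum>i\<in>I. (f i)^2) * (\<Sum>i\<in>I. (g i)^2))"
    by (rule real_sqrt_le_mono, rule Cauchy_Schwarz_ineq_sum)
  finally show ?thesis by (simp add: real_sqrt_mult)
qed

lemma amgm_term:
  fixes t x y :: real
  assumes "t > 0"
  shows "x * y \<le> (t * x^2 + y^2 / t) / 2"
proof -
  have "0 \<le> (t*x - y)^2 / t" using assms by simp
  also have "(t*x - y)^2 / t = t * x^2 + y^2 / t - 2 * x * y"
    using assms by (simp add: power2_eq_square field_simps)
  finally show ?thesis by simp
qed

lemma sin_pos_k:
  assumes "1 \<le> k" "k \<le> K"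
  shows "sin (real k * (pi / real (K+1))) > 0"
proof (rule sin_gt_zero)
  show "0 < real k * (pi / real (K + 1))" using assms by simp
  have "real k * (pi / real (K + 1)) = pi * (real k / real (K+1))" by simp
  also have "\<dots> < pi * 1" using assms by (intro mult_strict_left_mono) auto
  finally show "real k * (pi / real (K + 1)) < pi" by simp
qed

lemma path_ineq:
  fixes y :: "nat \<Rightarrow> real"
  assumes y0: "y 0 = 0"
  shows "(\<Sum>k=1..K. y k * y (k-1)) \<le> cos (pi / real (K+1)) * (\<Sum>k=1..K. (y k)^2)"
proof -
  define th where "th = pi / real (K+1)"
  define s where "s k = sin (real k * th)" for k
  have spos: "s k > 0" if "1 \<le> k" "k \<le> K" for k
    using sin_pos_k[OF that] unfolding s_def th_def .
  have s0: "s 0 = 0" by (simp add: s_def)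
  have sK: "s (K+1) = 0" by (simp add: s_def th_def)
  have srec: "s (k-1) + s (k+1) = 2 * cos th * s k" if "1 \<le> k" for k
  proof -
    have "real (k-1) * th = real k * th - th" using that by (simp add: of_nat_diff algebra_simps)
    moreover have "real (k+1) * th = real k * th + th" by (simp add: algebra_simps)
    ultimately show ?thesis unfolding s_def by (simp add: sin_diff sin_add)
  qed
  define g where "g k = (s (k+1) / s k) * (y k)^2 / 2" for k
  have trm: "y k * y (k-1) \<le> (s (k-1) / s k) * (y k)^2 / 2 + g (k-1)"
    if "k \<in> {1..K}" for k
  proof (cases "k = 1")
    case True
    then show ?thesis using y0 s0 by (simp add: g_def)
  next
    case False
    then have "s (k-1) > 0" "s k > 0" using that spos by auto
    then have "y k * y (k-1) \<le> ((s (k-1) / s k) * (y k)^2 + (y (k-1))^2 / (s (k-1) / s k)) / 2"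
      by (intro amgm_term) simp
    also have "\<dots> = (s (k-1) / s k) * (y k)^2 / 2 + g (k-1)"
      using False that by (simp add: g_def)
    finally show ?thesis .
  qed
  have "(\<Sum>k=1..K. y k * y (k-1)) \<le> (\<Sum>k=1..K. (s (k-1) / s k) * (y k)^2 / 2 + g (k-1))"
    by (rule sum_mono) (rule trm)
  also have "\<dots> = (\<Sum>k=1..K. (s (k-1) / s k) * (y k)^2 / 2) + (\<Sum>k=1..K. g (k-1))"
    by (rule sum.distrib)
  also have "(\<Sum>k=1..K. g (k-1)) = (\<Sum>k=1..K. g k)"
  proof (cases K)
    case 0 then show ?thesis by simp
  next
    case (Suc K')
    have "(\<Sum>k=1..K. g (k-1)) = (\<Sum>k=0..K'. g k)"
      using Suc sum.shift_bounds_cl_Suc_ivl[of "\<lambda>k. g (k-1)" 0 K'] by simp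
    also have "\<dots> = g 0 + (\<Sum>k=1..K'. g k)" by (simp add: sum.atLeast_Suc_atMost)
    also have "\<dots> = (\<Sum>k=1..K. g k)" using Suc y0 sK by (simp add: g_def)
    finally show ?thesis .
  qed
  also have "(\<Sum>k=1..K. (s (k-1) / s k) * (y k)^2 / 2) + (\<Sum>k=1..K. g k)
      = (\<Sum>k=1..K. cos th * (y k)^2)"
    unfolding sum.distrib[symmetric]
  proof (rule sum.cong)
    fix k assume k: "k \<in> {1..K}"
    then have "s k > 0" using spos by auto
    then have "(s (k-1) / s k) * (y k)^2 / 2 + g k = ((s (k-1) + s (k+1)) / s k) * (y k)^2 / 2"
      by (simp add: g_def field_simps)
    also have "\<dots> = cos th * (y k)^2" using srec[of k] k \<open>s k > 0\<close> by simp
    finally show "(s (k-1) / s k) * (y k)^2 / 2 + g k = cos th * (y k)^2" .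
  qed simp
  finally show ?thesis by (simp add: th_def sum_distrib_left)
qed

lemma nr_bound:
  fixes u :: "nat \<Rightarrow> complex" and A :: "nat \<Rightarrow> nat \<Rightarrow> complex"
  assumes S: "(\<Sum>i<m. (cmod (u i))^2) > 0"
  shows "cmod (\<Sum>i<m. \<Sum>j<m. cnj (u i) * A i j * u j)
           \<le> numerical_radius m A * (\<Sum>i<m. (cmod (u i))^2)"
proof -
  define S where "S = (\<Sum>i<m. (cmod (u i))^2)"
  have Sp: "S > 0" using S by (simp add: S_def)
  define x where "x i = u i / complex_of_real (sqrt S)" for i
  have xn: "(\<Sum>i<m. (cmod (x i))^2) = 1"
  proof -
    have "(\<Sum>i<m. (cmod (x i))^2) = (\<Sum>i<m. (cmod (u i))^2 / S)"
      using Sp by (simp add: x_def norm_divide power_divide)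
    also have "\<dots> = 1" using Sp by (simp add: S_def[symmetric] sum_divide_distrib[symmetric])
    finally show ?thesis .
  qed
  have Qx: "(\<Sum>i<m. \<Sum>j<m. cnj (x i) * A i j * x j)
      = (\<Sum>i<m. \<Sum>j<m. cnj (u i) * A i j * u j) / complex_of_real S"
  proof -
    have "(\<Sum>i<m. \<Sum>j<m. cnj (x i) * A i j * x j)
       = (\<Sum>i<m. \<Sum>j<m. cnj (u i) * A i j * u j / complex_of_real S)"
    proof (intro sum.cong refl)
      fix i j
      have "complex_of_real (sqrt S) * complex_of_real (sqrt S) = complex_of_real S"
        using Sp by (simp flip: of_real_mult)
      then show "cnj (x i) * A i j * x j = cnj (u i) * A i j * u j / complex_of_real S"
        using Sp by (simp add: x_def field_simps)
    qed
    then show ?thesis by (simp add: sum_divide_distrib)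
  qed
  define Set where "Set = {cmod (\<Sum>i<m. \<Sum>j<m. cnj (y i) * A i j * y j) | y :: nat \<Rightarrow> complex.
            (\<Sum>i<m. (cmod (y i))^2) = 1}"
  have mem: "cmod (\<Sum>i<m. \<Sum>j<m. cnj (x i) * A i j * x j) \<in> Set"
    unfolding Set_def using xn by blast
  have bdd: "bdd_above Set"
  proof (rule bdd_aboveI)
    fix r assume "r \<in> Set"
    then obtain y where y: "(\<Sum>i<m. (cmod (y i))^2) = 1"
      and r: "r = cmod (\<Sum>i<m. \<Sum>j<m. cnj (y i) * A i j * y j)" unfolding Set_def by blast
    have yb: "cmod (y i) \<le> 1" if "i < m" for i
    proof -
      have "(cmod (y i))^2 \<le> (\<Sum>i<m. (cmod (y i))^2)"
        using that by (intro member_le_sum) auto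
      then have "(cmod (y i))^2 \<le> 1^2" using y by simp
      then show ?thesis by (rule power2_le_imp_le) simp
    qed
    have "r \<le> (\<Sum>i<m. \<Sum>j<m. cmod (cnj (y i) * A i j * y j))"
      unfolding r by (rule order.trans[OF norm_sum sum_mono]) (rule norm_sum)
    also have "\<dots> \<le> (\<Sum>i<m. \<Sum>j<m. cmod (A i j))"
    proof (intro sum_mono)
      fix i j assume "i \<in> {..<m}" "j \<in> {..<m}"
      then have "cmod (y i) \<le> 1" "cmod (y j) \<le> 1" using yb by auto
      then have "cmod (y i) * cmod (A i j) * cmod (y j) \<le> 1 * cmod (A i j) * 1"
        by (intro mult_mono) auto
      then show "cmod (cnj (y i) * A i j * y j) \<le> cmod (A i j)" by (simp add: norm_mult)
    qed
    finally show "r \<le> (\<Sum>i<m. \<Sum>j<m. cmod (A i j))" .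
  qed
  have "cmod (\<Sum>i<m. \<Sum>j<m. cnj (x i) * A i j * x j) \<le> numerical_radius m A"
    unfolding numerical_radius_def Set_def[symmetric] by (rule cSup_upper[OF mem bdd])
  then have "cmod (\<Sum>i<m. \<Sum>j<m. cnj (u i) * A i j * u j) / S \<le> numerical_radius m A"
    using Sp by (simp add: Qx norm_divide)
  then show ?thesis using Sp by (simp add: S_def[symmetric] divide_le_eq)
qed

lemma final_alg:
  fixes x al be g S T :: real
  assumes g: "g \<ge> 0" and S: "S \<ge> 0" and T: "T \<ge> 0" and ST: "S + T > 0"
    and h: "x * (S + T) \<le> be * S + al * T + g * sqrt S * sqrt T"
  shows "x \<le> (al + be + sqrt ((al - be)^2 + g^2)) / 2"
proof -
  define D where "D = sqrt ((al - be)^2 + g^2)"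
  define L where "L = (al + be + D) / 2"
  have D0: "D \<ge> 0" by (simp add: D_def)
  have D2: "D^2 = (al - be)^2 + g^2" by (simp add: D_def)
  have Dge: "D \<ge> \<bar>al - be\<bar>" unfolding D_def
    by (rule real_le_rsqrt) simp
  have p: "L - be \<ge> 0" "L - al \<ge> 0" using Dge by (auto simp: L_def)
  have e1: "2 * (L - be) = D + (al - be)" "2 * (L - al) = D - (al - be)" by (simp_all add: L_def)
  have "4 * (L - be) * (L - al) = (2 * (L - be)) * (2 * (L - al))" by (simp add: algebra_simps)
  also have "\<dots> = D^2 - (al - be)^2" unfolding e1 by (simp add: power2_eq_square algebra_simps)
  finally have pq: "4 * (L - be) * (L - al) = g^2" using D2 by simp
  define p where "p = sqrt S" define q where "q = sqrt T"
  have pS: "p^2 = S" "q^2 = T" using S T by (auto simp: p_def q_def)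
  have form: "be * S + al * T + g * p * q \<le> L * (S + T)"
  proof (cases "L - be = 0")
    case True
    then have "g = 0" using pq g by simp
    then show ?thesis using True p(2) T by (simp add: algebra_simps mult_left_mono)
  next
    case False
    then have pos: "L - be > 0" using p by simp
    have "4 * (L - be) * (L * (S + T) - (be * S + al * T + g * p * q)) = (2*(L - be)*p - g*q)^2"
      using pq unfolding pS[symmetric] by algebra
    then have "0 \<le> 4 * (L - be) * (L * (S + T) - (be * S + al * T + g * p * q))" by simp
    then have "0 \<le> L * (S + T) - (be * S + al * T + g * p * q)"
      using pos by (simp add: zero_le_mult_iff)
    then show ?thesis by simp
  qed
  have "x * (S + T) \<le> L * (S + T)" using h form by (simp add: p_def q_def)
  then show ?thesis using ST by (simp add: L_def D_def)
qed

theorem theorem3p5: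
  fixes m n :: nat and a :: "nat \<Rightarrow> real" and mm :: "nat \<Rightarrow> nat"
    and c :: "nat \<Rightarrow> complex" and b :: "nat \<Rightarrow> nat \<Rightarrow> complex" and z0 :: complex
  assumes "m \<ge> 1" and "n \<ge> 1"
    and "inj_on a {1..n}"
    and "\<forall>j\<in>{1..n}. a j \<ge> 0"
    and "\<forall>j\<in>{1..n}. mm j \<ge> 1"
    and "\<forall>j\<in>{1..n}. z0 \<noteq> complex_of_real (a j)"
    and "rfun m c n a mm b z0 = 0"
  shows "cmod z0 \<le>
    (let \<alpha> = Max ((\<lambda>j. a j + cos (pi / real (mm j + 1))) ` {1..n});
         \<beta> = numerical_radius m (B0 m c);
         \<gamma> = sqrt (real (\<Sum>j=1..n. mm j));
         \<delta> = sqrt (\<Sum>j=1..n. \<Sum>k=1..mm j. (cmod (b j k))^2)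
     in (\<alpha> + \<beta> + sqrt ((\<alpha> - \<beta>)^2 + (\<gamma> + \<delta>)^2)) / 2)"
proof -
  note m1 = assms(1) and a0 = assms(4) and mm1 = assms(5) and zne = assms(6) and rz = assms(7)
  define z where "z = z0"
  define al where "al = Max ((\<lambda>j. a j + cos (pi / real (mm j + 1))) ` {1..n})"
  define be where "be = numerical_radius m (B0 m c)"
  define ga where "ga = sqrt (real (\<Sum>j=1..n. mm j))"
  define de where "de = sqrt (\<Sum>j=1..n. \<Sum>k=1..mm j. (cmod (b j k))^2)"
  define u where "u i = z ^ i" for i :: nat
  define v where "v j k = 1 / (z - complex_of_real (a j)) ^ k" for j k :: nat
  define S where "S = (\<Sum>i<m. (cmod (u i))^2)"
  define Tj where "Tj j = (\<Sum>k=1..mm j. (cmod (v j k))^2)" for j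
  define T where "T = (\<Sum>j=1..n. Tj j)"
  define R where "R = (\<Sum>j=1..n. \<Sum>k=1..mm j. b j k * v j k)"
  define P where "P j = (\<Sum>k=1..mm j. cnj (v j k) * v j (k-1))" for j
  define QB where "QB = (\<Sum>i<m. \<Sum>j<m. cnj (u i) * B0 m c i j * u j)"
  have hR: "R = z ^ m - (\<Sum>i<m. c i * z ^ i)"
  proof -
    have "rfun m c n a mm b z = 0" using rz by (simp add: z_def)
    moreover have "(\<Sum>j=1..n. \<Sum>k=1..mm j. b j k / (z - complex_of_real (a j)) ^ k) = R"
      unfolding R_def v_def by simp
    ultimately show ?thesis unfolding rfun_def by (simp add: algebra_simps)
  qed
  have row: "(\<Sum>j<m. B0 m c i j * u j) = z * u i - (if i = m - 1 then R else 0)"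
    if i: "i < m" for i
  proof (cases "i = m - 1")
    case True
    have "(\<Sum>j<m. B0 m c i j * u j) = (\<Sum>j<m. c j * z ^ j)"
      using True m1 by (intro sum.cong) (auto simp: B0_def u_def)
    also have "\<dots> = z ^ m - R" using hR by simp
    also have "z ^ m = z * u i" using True m1 by (simp add: u_def flip: power_Suc)
    finally show ?thesis using True by simp
  next
    case False
    have "(\<Sum>j<m. B0 m c i j * u j) = (\<Sum>j<m. if j = i + 1 then u j else 0)"
      using False by (intro sum.cong) (auto simp: B0_def)
    also have "\<dots> = u (i+1)" using False i by (simp add: sum.delta')
    finally show ?thesis using False by (simp add: u_def)
  qed
  have cn: "cnj w * w = complex_of_real ((cmod w)^2)" for w :: complex
    by (metis complex_norm_square mult.commute of_real_power)
  have hQB: "z * complex_of_real S = QB + cnj (u (m-1)) * R"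
  proof -
    have "QB = (\<Sum>i<m. cnj (u i) * (\<Sum>j<m. B0 m c i j * u j))"
      unfolding QB_def by (simp add: sum_distrib_left mult.assoc)
    also have "\<dots> = (\<Sum>i<m. z * (cnj (u i) * u i) - (if i = m - 1 then cnj (u i) * R else 0))"
    proof (intro sum.cong refl)
      fix i assume "i \<in> {..<m}"
      then have "i < m" by simp
      show "cnj (u i) * (\<Sum>j<m. B0 m c i j * u j)
          = z * (cnj (u i) * u i) - (if i = m - 1 then cnj (u i) * R else 0)"
        by (simp only: row[OF \<open>i < m\<close>]) (simp add: algebra_simps)
    qed
    also have "\<dots> = z * complex_of_real S - cnj (u (m-1)) * R"
      using m1 by (simp add: sum_subtractf sum_distrib_left[symmetric] cn S_def sum.delta')
    finally show ?thesis by simp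
  qed
  have vrec: "z * v j k = complex_of_real (a j) * v j k + v j (k - 1)"
    if jk: "j \<in> {1..n}" "k \<ge> 1" for j k
  proof -
    have ne: "z - complex_of_real (a j) \<noteq> 0" using zne jk by (simp add: z_def)
    obtain k' where k: "k = Suc k'" using jk(2) by (cases k) auto
    show ?thesis using ne unfolding v_def k by (simp add: field_simps)
  qed
  have hT: "z * complex_of_real (Tj j) = complex_of_real (a j) * complex_of_real (Tj j) + P j"
    if j: "j \<in> {1..n}" for j
  proof -
    have "z * complex_of_real (Tj j) = (\<Sum>k=1..mm j. z * (cnj (v j k) * v j k))"
      by (simp add: Tj_def cn sum_distrib_left)
    also have "\<dots> = (\<Sum>k=1..mm j. cnj (v j k) * (z * v j k))"
      by (simp add: algebra_simps)
    also have "\<dots> = (\<Sum>k=1..mm j. complex_of_real (a j) * (cnj (v j k) * v j k) + cnj (v j k) * v j (k-1))"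
      using j by (intro sum.cong refl) (simp add: vrec algebra_simps)
    also have "\<dots> = complex_of_real (a j) * complex_of_real (Tj j) + P j"
      by (simp add: sum.distrib sum_distrib_left[symmetric] cn Tj_def P_def)
    finally show ?thesis .
  qed
  have main: "z * complex_of_real (S + T) = QB + cnj (u (m-1)) * R
      + (\<Sum>j=1..n. complex_of_real (a j) * complex_of_real (Tj j) + P j)"
  proof -
    have "z * complex_of_real T = (\<Sum>j=1..n. z * complex_of_real (Tj j))"
      by (simp add: T_def sum_distrib_left)
    also have "\<dots> = (\<Sum>j=1..n. complex_of_real (a j) * complex_of_real (Tj j) + P j)"
      by (intro sum.cong refl) (simp add: hT)
    finally show ?thesis using hQB by (simp add: distrib_left)
  qed
  have S1: "1 \<le> S"
  proof -
    have "(cmod (u 0))^2 \<le> S" unfolding S_def using m1 by (intro member_le_sum) auto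
    then show ?thesis by (simp add: u_def)
  qed
  have Tj0: "Tj j \<ge> 0" for j by (simp add: Tj_def sum_nonneg)
  have T0: "T \<ge> 0" by (simp add: T_def sum_nonneg Tj0)
  have sqS1: "1 \<le> sqrt S" using S1 by simp
  have um: "cmod (u (m-1)) \<le> sqrt S"
  proof (rule real_le_rsqrt)
    show "(cmod (u (m-1)))^2 \<le> S" unfolding S_def using m1 by (intro member_le_sum) auto
  qed
  have hQBn: "cmod QB \<le> be * S"
    using nr_bound[where m=m and u=u and A="B0 m c"] S1 by (simp add: QB_def be_def S_def)
  have hRn: "cmod R \<le> de * sqrt T"
  proof -
    have "cmod R \<le> (\<Sum>j=1..n. \<Sum>k=1..mm j. cmod (b j k) * cmod (v j k))"
      unfolding R_def by (rule order.trans[OF norm_sum sum_mono], rule order.trans[OF norm_sum])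
        (simp add: norm_mult)
    also have "\<dots> = (\<Sum>p\<in>Sigma {1..n} (\<lambda>j. {1..mm j}). cmod (b (fst p) (snd p)) * cmod (v (fst p) (snd p)))"
      by (subst sum.Sigma) (auto simp: case_prod_beta)
    also have "\<dots> \<le> sqrt (\<Sum>p\<in>Sigma {1..n} (\<lambda>j. {1..mm j}). (cmod (b (fst p) (snd p)))^2)
        * sqrt (\<Sum>p\<in>Sigma {1..n} (\<lambda>j. {1..mm j}). (cmod (v (fst p) (snd p)))^2)"
      by (rule cs_real)
    also have "(\<Sum>p\<in>Sigma {1..n} (\<lambda>j. {1..mm j}). (cmod (b (fst p) (snd p)))^2)
       = (\<Sum>j=1..n. \<Sum>k=1..mm j. (cmod (b j k))^2)"
      by (subst sum.Sigma) (auto simp: case_prod_beta)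
    also have "(\<Sum>p\<in>Sigma {1..n} (\<lambda>j. {1..mm j}). (cmod (v (fst p) (snd p)))^2) = T"
      unfolding T_def Tj_def by (subst sum.Sigma) (auto simp: case_prod_beta)
    finally show ?thesis by (simp add: de_def)
  qed
  have hPn: "cmod (P j) \<le> cmod (v j 1) + cos (pi / real (mm j + 1)) * Tj j"
    if j: "j \<in> {1..n}" for j
  proof -
    define K where "K = mm j"
    have K1: "1 \<le> K" using mm1 j by (simp add: K_def)
    define y where "y k = (if k = 0 then 0 else cmod (v j k))" for k
    have "cmod (P j) \<le> (\<Sum>k=1..K. cmod (v j k) * cmod (v j (k-1)))"
      unfolding P_def K_def by (rule order.trans[OF norm_sum]) (simp add: norm_mult)
    also have "\<dots> = (\<Sum>k=1..K. y k * y (k-1) + (if k = 1 then cmod (v j 1) else 0))"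
      by (intro sum.cong refl) (auto simp: y_def v_def)
    also have "\<dots> = (\<Sum>k=1..K. y k * y (k-1)) + cmod (v j 1)"
      using K1 by (simp add: sum.distrib)
    also have "(\<Sum>k=1..K. y k * y (k-1)) \<le> cos (pi / real (K+1)) * (\<Sum>k=1..K. (y k)^2)"
      by (rule path_ineq) (simp add: y_def)
    also have "(\<Sum>k=1..K. (y k)^2) = Tj j"
      unfolding Tj_def K_def by (intro sum.cong refl) (auto simp: y_def)
    finally show ?thesis by (simp add: K_def)
  qed
  have ga0: "ga \<ge> 0" unfolding ga_def by (simp add: sum_nonneg)
  have hV1: "(\<Sum>j=1..n. cmod (v j 1)) \<le> ga * sqrt T"
  proof -
    have "(\<Sum>j=1..n. cmod (v j 1)) = (\<Sum>j=1..n. 1 * cmod (v j 1))" by simp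
    also have "\<dots> \<le> sqrt (\<Sum>j=1..n. 1^2) * sqrt (\<Sum>j=1..n. (cmod (v j 1))^2)"
      by (rule cs_real)
    also have "\<dots> \<le> ga * sqrt T"
    proof (rule mult_mono)
      have "real n = (\<Sum>j=1..n. 1::real)" by simp
      also have "\<dots> \<le> (\<Sum>j=1..n. real (mm j))" using mm1 by (intro sum_mono) auto
      finally show "sqrt (\<Sum>j=1..n. 1^2) \<le> ga" by (simp add: ga_def)
      have "(\<Sum>j=1..n. (cmod (v j 1))^2) \<le> T"
        unfolding T_def Tj_def using mm1
        by (intro sum_mono member_le_sum) auto
      then show "sqrt (\<Sum>j=1..n. (cmod (v j 1))^2) \<le> sqrt T" by simp
    qed (auto simp: ga_def intro: sum_nonneg)
    finally show ?thesis .
  qed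
  have hA: "(\<Sum>j=1..n. a j * Tj j + cos (pi / real (mm j + 1)) * Tj j) \<le> al * T"
  proof -
    have "(\<Sum>j=1..n. a j * Tj j + cos (pi / real (mm j + 1)) * Tj j) \<le> (\<Sum>j=1..n. al * Tj j)"
    proof (intro sum_mono)
      fix j assume j: "j \<in> {1..n}"
      have "a j + cos (pi / real (mm j + 1)) \<le> al" unfolding al_def using j by (intro Max_ge) auto
      then show "a j * Tj j + cos (pi / real (mm j + 1)) * Tj j \<le> al * Tj j"
        using Tj0[of j] by (simp add: distrib_right[symmetric] mult_right_mono)
    qed
    then show ?thesis by (simp add: T_def sum_distrib_left)
  qed
  have bound: "cmod z * (S + T) \<le> be * S + al * T + (ga + de) * sqrt S * sqrt T"
  proof -
    have "cmod z * (S + T) = cmod (z * complex_of_real (S + T))"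
      using S1 T0 by (simp add: norm_mult del: of_real_add)
    also have "\<dots> \<le> cmod QB + cmod (u (m-1)) * cmod R
        + (\<Sum>j=1..n. a j * Tj j + cmod (P j))"
    proof -
      have "cmod (\<Sum>j=1..n. complex_of_real (a j) * complex_of_real (Tj j) + P j)
          \<le> (\<Sum>j=1..n. a j * Tj j + cmod (P j))"
      proof (rule order.trans[OF norm_sum sum_mono])
        fix j assume "j \<in> {1..n}"
        then have "a j \<ge> 0" using a0 by auto
        then show "cmod (complex_of_real (a j) * complex_of_real (Tj j) + P j) \<le> a j * Tj j + cmod (P j)"
          using Tj0[of j] by (intro order.trans[OF norm_triangle_ineq]) (simp add: norm_mult)
      qed
      then show ?thesis unfolding main
        by (intro order.trans[OF norm_triangle_ineq] add_mono order.trans[OF norm_triangle_ineq])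
          (auto simp: norm_mult)
    qed
    also have "\<dots> \<le> be * S + sqrt S * (de * sqrt T)
        + ((\<Sum>j=1..n. a j * Tj j + cos (pi / real (mm j + 1)) * Tj j) + (\<Sum>j=1..n. cmod (v j 1)))"
    proof (intro add_mono hQBn mult_mono um hRn)
      show "(\<Sum>j=1..n. a j * Tj j + cmod (P j)) \<le> (\<Sum>j=1..n. a j * Tj j + cos (pi / real (mm j + 1)) * Tj j) + (\<Sum>j=1..n. cmod (v j 1))"
        unfolding sum.distrib[symmetric] by (intro sum_mono) (use hPn in fastforce)
    qed (use S1 in \<open>auto simp: de_def\<close>)
    also have "\<dots> \<le> be * S + sqrt S * (de * sqrt T) + (al * T + sqrt S * (ga * sqrt T))"
    proof -
      have "(\<Sum>j=1..n. cmod (v j 1)) \<le> 1 * (ga * sqrt T)" using hV1 by simp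
      also have "\<dots> \<le> sqrt S * (ga * sqrt T)" using sqS1 T0 ga0
        by (intro mult_right_mono) auto
      finally show ?thesis using hA by simp
    qed
    also have "\<dots> = be * S + al * T + (ga + de) * sqrt S * sqrt T" by (simp add: algebra_simps)
    finally show ?thesis .
  qed
  have "cmod z \<le> (al + be + sqrt ((al - be)^2 + (ga + de)^2)) / 2"
    by (rule final_alg[OF _ _ T0 _ bound]) (use S1 T0 ga0 in \<open>auto simp: de_def intro!: add_nonneg_nonneg sum_nonneg\<close>)
  then show ?thesis by (simp add: Let_def z_def al_def be_def ga_def de_def)
qed

end
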